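(* There exists a constant $C$ (depending on the maximal curvature of $\Gamma$ but independent of the interface location relative to the mesh) such that, for $h$ small enough, every interface element $T$ satisfies $|T_{int}|\le Ch^3$, where $|\cdot|$ denotes area.
   Context: $\mathcal T_h$ is a Cartesian triangular or rectangular mesh of size $h$ of a bounded planar domain containing a curve $\Gamma$ that is $C^2$ inside each interface element (an element whose interior meets $\Gamma$), and which meets the boundary of each interface element $T$ at exactly two points $D,E$ lying on different edges. The set $T_{int}=\bigcup\{l_t\cap T: l_t \text{ is a tangent line to } \Gamma\cap T\}$ is the region of $T$ swept by tangent lines to $\Gamma\cap T$. *)

theory Defs
  imports "HOL-Analysis.Analysis"
begin

definition cross2 :: "real \<times> real \<Rightarrow> real \<times> real \<Rightarrow> real" where
  "cross2 u v = fst u * snd v - snd u * fst v"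

definition sq_corner :: "real \<Rightarrow> int \<Rightarrow> int \<Rightarrow> nat \<Rightarrow> real \<times> real" where
  "sq_corner h i j k =
     (if k mod 4 = 0 then (of_int i * h, of_int j * h)
      else if k mod 4 = 1 then (of_int (i+1) * h, of_int j * h)
      else if k mod 4 = 2 then (of_int (i+1) * h, of_int (j+1) * h)
      else (of_int i * h, of_int (j+1) * h))"

definition rect_element :: "real \<Rightarrow> (real \<times> real) set \<Rightarrow> (real \<times> real) set set \<Rightarrow> bool" where
  "rect_element h T Edges \<longleftrightarrow> (\<exists>i j.
     T = convex hull {sq_corner h i j 0, sq_corner h i j 1, sq_corner h i j 2, sq_corner h i j 3} \<and>
     Edges = {closed_segment (sq_corner h i j 0) (sq_corner h i j 1),
              closed_segment (sq_corner h i j 1) (sq_corner h i j 2),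
              closed_segment (sq_corner h i j 2) (sq_corner h i j 3),
              closed_segment (sq_corner h i j 3) (sq_corner h i j 0)})"

text \<open>T is a triangular element of the Cartesian triangular mesh of size h:
  one of the two halves of a grid square cut along a diagonal.\<close>

definition tri_element :: "real \<Rightarrow> (real \<times> real) set \<Rightarrow> (real \<times> real) set set \<Rightarrow> bool" where
  "tri_element h T Edges \<longleftrightarrow> (\<exists>i j k.
     let p = sq_corner h i j (k+1); q = sq_corner h i j (k+2); r = sq_corner h i j (k+3) in
     T = convex hull {p, q, r} \<and>
     Edges = {closed_segment p q, closed_segment q r, closed_segment r p})"

definition mesh_element :: "real \<Rightarrow> (real \<times> real) set \<Rightarrow> (real \<times> real) set set \<Rightarrow> bool" where
  "mesh_element h T Edges \<longleftrightarrow> rect_element h T Edges \<or> tri_element h T Edges"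

definition interface_arc ::
  "real \<Rightarrow> (real \<Rightarrow> real \<times> real) \<Rightarrow> (real \<Rightarrow> real \<times> real) \<Rightarrow> (real \<Rightarrow> real \<times> real)
   \<Rightarrow> real \<Rightarrow> real \<Rightarrow> (real \<times> real) set \<Rightarrow> (real \<times> real) set set \<Rightarrow> bool" where
  "interface_arc \<kappa> g g1 g2 a b T Edges \<longleftrightarrow>
     a < b \<and> inj_on g {a..b} \<and>
     (\<forall>t\<in>{a..b}. (g has_vector_derivative g1 t) (at t within {a..b})) \<and>
     (\<forall>t\<in>{a..b}. (g1 has_vector_derivative g2 t) (at t within {a..b})) \<and>
     continuous_on {a..b} g2 \<and>
     (\<forall>t\<in>{a..b}. g1 t \<noteq> 0) \<and>
     (\<forall>t\<in>{a..b}. \<bar>cross2 (g1 t) (g2 t)\<bar> / norm (g1 t) ^ 3 \<le> \<kappa>) \<and>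
     g ` {a<..<b} \<subseteq> interior T \<and>
     g a \<in> frontier T \<and> g b \<in> frontier T \<and>
     \<not> (\<exists>e\<in>Edges. g a \<in> e \<and> g b \<in> e)"

text \<open>T_int: the part of T swept by the tangent lines to gamma([a,b]).\<close>

definition tangent_region ::
  "(real \<Rightarrow> real \<times> real) \<Rightarrow> (real \<Rightarrow> real \<times> real) \<Rightarrow> real \<Rightarrow> real \<Rightarrow> (real \<times> real) set
   \<Rightarrow> (real \<times> real) set" where
  "tangent_region g g1 a b T = (\<Union>t\<in>{a..b}. {g t + s *\<^sub>R g1 t | s. True} \<inter> T)"

end

theory Submission
  imports Defs
begin


lemma emeas_to_meas:
  assumes "emeasure M A \<le> ennreal x" "x \<ge> 0"
  shows "measure M A \<le> x"
proof -
  have "measure M A = enn2real (emeasure M A)" by (simp add: measure_def)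
  also have "\<dots> \<le> enn2real (ennreal x)"
    using assms by (intro enn2real_mono) auto
  finally show ?thesis using assms by simp
qed

lemma slice_bound:
  fixes n2 A w :: real
  assumes "\<bar>n2\<bar> \<ge> 1/2" "w \<ge> 0"
  shows "{y. \<bar>A + (y - c2) * n2\<bar> \<le> w} \<subseteq> {c2 - A/n2 - 2*w .. c2 - A/n2 + 2*w}"
proof
  fix y assume "y \<in> {y. \<bar>A + (y - c2) * n2\<bar> \<le> w}"
  hence h: "\<bar>A + (y - c2) * n2\<bar> \<le> w" by simp
  have nz: "n2 \<noteq> 0" using assms by auto
  have "A + (y - c2) * n2 = (y - (c2 - A/n2)) * n2" using nz by (simp add: field_simps)
  hence "\<bar>y - (c2 - A/n2)\<bar> * \<bar>n2\<bar> \<le> w" using h by (simp add: abs_mult)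
  moreover have "w * 1 \<le> w * (2 * \<bar>n2\<bar>)" using assms by (intro mult_left_mono) auto
  hence "w \<le> 2 * w * \<bar>n2\<bar>" by simp
  ultimately have "\<bar>y - (c2 - A/n2)\<bar> * \<bar>n2\<bar> \<le> 2 * w * \<bar>n2\<bar>" by linarith
  hence "\<bar>y - (c2 - A/n2)\<bar> \<le> 2 * w" using nz by simp
  thus "y \<in> {c2 - A/n2 - 2*w .. c2 - A/n2 + 2*w}" by auto
qed

lemma strip_measure:
  fixes n1 n2 c1 c2 w x0 y0 h :: real
  assumes n: "n1^2 + n2^2 = 1" and w: "w \<ge> 0" and h: "h \<ge> 0"
  shows "measure lebesgue {p. p \<in> cbox (x0,y0) (x0+h,y0+h) \<and>
             \<bar>(fst p - c1)*n1 + (snd p - c2)*n2\<bar> \<le> w} \<le> 4*w*h"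
proof -
  define S where "S = {p. p \<in> cbox (x0,y0) (x0+h,y0+h) \<and>
             \<bar>(fst p - c1)*n1 + (snd p - c2)*n2\<bar> \<le> w}"
  have cl: "closed {p::real\<times>real. \<bar>(fst p - c1)*n1 + (snd p - c2)*n2\<bar> \<le> w}"
    by (intro closed_Collect_le continuous_intros)
  have "S = cbox (x0,y0) (x0+h,y0+h) \<inter> {p::real\<times>real. \<bar>(fst p - c1)*n1 + (snd p - c2)*n2\<bar> \<le> w}"
    by (auto simp: S_def)
  hence cS: "compact S" using cl by (simp add: compact_Int_closed)
  hence Sb: "S \<in> sets borel" by (simp add: borel_compact)
  have Sp: "S \<in> sets (lborel \<Otimes>\<^sub>M lborel)" using Sb by (simp only: lborel_prod sets_lborel)
  have "emeasure lborel S \<le> ennreal (4*w*h)"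
  proof (cases "\<bar>n2\<bar> \<ge> 1/2")
    case True
    have "emeasure lborel S = emeasure (lborel \<Otimes>\<^sub>M lborel) S" by (simp add: lborel_prod)
    also have "\<dots> = (\<integral>\<^sup>+x. emeasure lborel (Pair x -` S) \<partial>lborel)"
      by (rule lborel.emeasure_pair_measure_alt[OF Sp])
    also have "\<dots> \<le> (\<integral>\<^sup>+x. ennreal (4*w) * indicator {x0..x0+h} x \<partial>lborel)"
    proof (rule nn_integral_mono)
      fix x :: real
      show "emeasure lborel (Pair x -` S) \<le> ennreal (4*w) * indicator {x0..x0+h} x"
      proof (cases "x \<in> {x0..x0+h}")
        case False
        hence "Pair x -` S = {}" by (auto simp: S_def cbox_Pair_iff)
        thus ?thesis by simp
      next
        case xin: True
        let ?A = "(x - c1)*n1"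
        have "Pair x -` S \<subseteq> {y. \<bar>?A + (y - c2) * n2\<bar> \<le> w}" by (auto simp: S_def)
        also have "\<dots> \<subseteq> {c2 - ?A/n2 - 2*w .. c2 - ?A/n2 + 2*w}"
          by (rule slice_bound[OF True w])
        finally have "emeasure lborel (Pair x -` S) \<le> emeasure lborel {c2 - ?A/n2 - 2*w .. c2 - ?A/n2 + 2*w}"
          by (intro emeasure_mono) auto
        also have "\<dots> = ennreal (4*w)" using w by simp
        finally show ?thesis using xin by simp
      qed
    qed
    also have "\<dots> = ennreal (4*w) * emeasure lborel {x0..x0+h}"
      by (rule nn_integral_cmult_indicator) simp
    also have "\<dots> = ennreal (4*w*h)" using w h by (simp add: ennreal_mult)
    finally show ?thesis .
  next
    case False
    hence n1: "\<bar>n1\<bar> \<ge> 1/2"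
    proof -
      have "\<bar>n2\<bar> < 1/2" using False by simp
      hence "\<bar>n2\<bar>^2 < (1/2)^2" by (intro power_strict_mono) auto
      hence "n2^2 < (1/2)^2" by simp
      hence "(1/2)^2 \<le> n1^2" using n by (simp add: power2_eq_square)
      hence "\<bar>1/2\<bar> \<le> \<bar>n1\<bar>" by (simp only: abs_le_square_iff)
      thus ?thesis by simp
    qed
    have "emeasure lborel S = emeasure (lborel \<Otimes>\<^sub>M lborel) S" by (simp add: lborel_prod)
    also have "\<dots> = (\<integral>\<^sup>+y. emeasure lborel ((\<lambda>x. (x, y)) -` S) \<partial>lborel)"
      by (rule lborel_pair.emeasure_pair_measure_alt2[OF Sp])
    also have "\<dots> \<le> (\<integral>\<^sup>+y. ennreal (4*w) * indicator {y0..y0+h} y \<partial>lborel)"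
    proof (rule nn_integral_mono)
      fix y :: real
      show "emeasure lborel ((\<lambda>x. (x, y)) -` S) \<le> ennreal (4*w) * indicator {y0..y0+h} y"
      proof (cases "y \<in> {y0..y0+h}")
        case False
        hence "(\<lambda>x. (x, y)) -` S = {}" by (auto simp: S_def cbox_Pair_iff)
        thus ?thesis by simp
      next
        case yin: True
        let ?A = "(y - c2)*n2"
        have "(\<lambda>x. (x, y)) -` S \<subseteq> {x. \<bar>?A + (x - c1) * n1\<bar> \<le> w}" by (auto simp: S_def add.commute)
        also have "\<dots> \<subseteq> {c1 - ?A/n1 - 2*w .. c1 - ?A/n1 + 2*w}"
          by (rule slice_bound[OF n1 w])
        finally have "emeasure lborel ((\<lambda>x. (x, y)) -` S) \<le> emeasure lborel {c1 - ?A/n1 - 2*w .. c1 - ?A/n1 + 2*w}"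
          by (intro emeasure_mono) auto
        also have "\<dots> = ennreal (4*w)" using w by simp
        finally show ?thesis using yin by simp
      qed
    qed
    also have "\<dots> = ennreal (4*w) * emeasure lborel {y0..y0+h}"
      by (rule nn_integral_cmult_indicator) simp
    also have "\<dots> = ennreal (4*w*h)" using w h by (simp add: ennreal_mult)
    finally show ?thesis .
  qed
  hence "measure lborel S \<le> 4*w*h" using w h by (intro emeas_to_meas) auto
  thus ?thesis using Sb by (simp add: S_def[symmetric])
qed



lemma alg1:
  fixes r x y A B n1 n2 :: real
  assumes r: "r > 0" and rr: "r * r = x^2 + y^2"
  shows "((A * n1 + B * n2) * r - (x * n1 + y * n2) * (inverse r / 2 * (2 * x * A + 2 * y * B))) / (r * r) =
       (x * B - y * A) * (n2 * x - n1 * y) / ((x^2 + y^2) * r)"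
proof -
  have "((A * n1 + B * n2) * r - (x * n1 + y * n2) * (inverse r / 2 * (2 * x * A + 2 * y * B))) / (r * r)
      = ((A * n1 + B * n2) * (r * r) - (x * n1 + y * n2) * (x * A + y * B)) / ((r * r) * r)"
    using r by (simp add: field_simps)
  also have "\<dots> = ((A * n1 + B * n2) * (x^2 + y^2) - (x * n1 + y * n2) * (x * A + y * B)) / ((x^2 + y^2) * r)"
    by (simp only: rr)
  also have "(A * n1 + B * n2) * (x^2 + y^2) - (x * n1 + y * n2) * (x * A + y * B) = (x * B - y * A) * (n2 * x - n1 * y)"
    by (simp add: algebra_simps power2_eq_square)
  finally show ?thesis .
qed

lemma s_deriv:
  fixes X1 Y1 :: "real \<Rightarrow> real"
  assumes dA: "(X1 has_real_derivative A) (at t)" and dB: "(Y1 has_real_derivative B) (at t)"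
    and M: "X1 t^2 + Y1 t^2 > 0"
  shows "((\<lambda>t. (X1 t * n1 + Y1 t * n2) / sqrt (X1 t^2 + Y1 t^2)) has_real_derivative
     (X1 t * B - Y1 t * A) * (n2 * X1 t - n1 * Y1 t) / ((X1 t^2 + Y1 t^2) * sqrt (X1 t^2 + Y1 t^2))) (at t)"
proof -
  let ?M = "X1 t^2 + Y1 t^2"
  have sq: "sqrt ?M * sqrt ?M = ?M" using M by simp
  have sp: "sqrt ?M > 0" using M by simp
  have dN: "((\<lambda>t. X1 t * n1 + Y1 t * n2) has_real_derivative A * n1 + B * n2) (at t)"
    by (rule derivative_eq_intros dA dB refl | simp)+
  have dM: "((\<lambda>t. X1 t^2 + Y1 t^2) has_real_derivative 2 * X1 t * A + 2 * Y1 t * B) (at t)"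
    by (rule derivative_eq_intros dA dB refl | simp)+
  have dS: "((\<lambda>t. sqrt (X1 t^2 + Y1 t^2)) has_real_derivative
        inverse (sqrt ?M) / 2 * (2 * X1 t * A + 2 * Y1 t * B)) (at t)"
    by (rule DERIV_chain2[OF DERIV_real_sqrt[OF M] dM])
  have "((\<lambda>t. (X1 t * n1 + Y1 t * n2) / sqrt (X1 t^2 + Y1 t^2)) has_real_derivative
     ((A * n1 + B * n2) * sqrt ?M - (X1 t * n1 + Y1 t * n2) * (inverse (sqrt ?M) / 2 * (2 * X1 t * A + 2 * Y1 t * B))) / (sqrt ?M * sqrt ?M)) (at t)"
    by (rule DERIV_divide[OF dN dS]) (metis sp less_irrefl)
  then show ?thesis
  proof (rule DERIV_cong)
    show "((A * n1 + B * n2) * sqrt ?M - (X1 t * n1 + Y1 t * n2) * (inverse (sqrt ?M) / 2 * (2 * X1 t * A + 2 * Y1 t * B))) / (sqrt ?M * sqrt ?M) =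
       (X1 t * B - Y1 t * A) * (n2 * X1 t - n1 * Y1 t) / (?M * sqrt ?M)"
      by (rule alg1[OF sp sq])
  qed
qed

lemma cmp:
  fixes f \<phi> f' \<phi>' :: "real \<Rightarrow> real"
  assumes at: "a \<le> t" and cf: "continuous_on {a..t} f" and cp: "continuous_on {a..t} \<phi>"
    and df: "\<And>x. a < x \<Longrightarrow> x < t \<Longrightarrow> (f has_real_derivative f' x) (at x)"
    and dp: "\<And>x. a < x \<Longrightarrow> x < t \<Longrightarrow> (\<phi> has_real_derivative \<phi>' x) (at x)"
    and le: "\<And>x. a < x \<Longrightarrow> x < t \<Longrightarrow> \<bar>f' x\<bar> \<le> \<phi>' x"
  shows "\<bar>f t - f a\<bar> \<le> \<phi> t - \<phi> a"
proof -
  have "(\<lambda>x. \<phi> x - f x) a \<le> (\<lambda>x. \<phi> x - f x) t"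
  proof (rule DERIV_nonneg_imp_increasing_open[OF at])
    fix x assume x: "a < x" "x < t"
    show "\<exists>y. ((\<lambda>x. \<phi> x - f x) has_real_derivative y) (at x) \<and> 0 \<le> y"
      using DERIV_diff[OF dp[OF x] df[OF x]] le[OF x] by (intro exI[of _ "\<phi>' x - f' x"]) auto
  next
    show "continuous_on {a..t} (\<lambda>x. \<phi> x - f x)" using cf cp by (intro continuous_intros)
  qed
  moreover have "(\<lambda>x. \<phi> x + f x) a \<le> (\<lambda>x. \<phi> x + f x) t"
  proof (rule DERIV_nonneg_imp_increasing_open[OF at])
    fix x assume x: "a < x" "x < t"
    show "\<exists>y. ((\<lambda>x. \<phi> x + f x) has_real_derivative y) (at x) \<and> 0 \<le> y"
      using DERIV_add[OF dp[OF x] df[OF x]] le[OF x] by (intro exI[of _ "\<phi>' x + f' x"]) auto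
  next
    show "continuous_on {a..t} (\<lambda>x. \<phi> x + f x)" using cf cp by (intro continuous_intros)
  qed
  ultimately show ?thesis by auto
qed

lemma box2:
  fixes u1 u2 v1 v2 e1 e2 :: real
  assumes "x0 \<le> u1" "u1 \<le> x0 + h" "y0 \<le> u2" "u2 \<le> y0 + h"
    "x0 \<le> v1" "v1 \<le> x0 + h" "y0 \<le> v2" "v2 \<le> y0 + h" "\<bar>e1\<bar> \<le> 1" "\<bar>e2\<bar> \<le> 1"
  shows "\<bar>(u1 - v1) * e1 + (u2 - v2) * e2\<bar> \<le> 2 * h"
proof -
  have "\<bar>(u1 - v1) * e1\<bar> \<le> h * 1" unfolding abs_mult
    using assms by (intro mult_mono) auto
  moreover have "\<bar>(u2 - v2) * e2\<bar> \<le> h * 1" unfolding abs_mult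
    using assms by (intro mult_mono) auto
  ultimately show ?thesis by linarith
qed

lemma cauchy2:
  fixes a b x y :: real
  shows "(a * x + b * y)^2 \<le> (a^2 + b^2) * (x^2 + y^2)"
proof -
  have "0 \<le> (a * y - b * x)^2" by simp
  thus ?thesis by (simp add: algebra_simps power2_eq_square)
qed

lemma abs_le_sqrt:
  fixes z m :: real
  assumes "z^2 \<le> m"
  shows "\<bar>z\<bar> \<le> sqrt m"
  using assms real_sqrt_le_mono by fastforce



lemma core:
  fixes X Y X1 Y1 X2 Y2 :: "real \<Rightarrow> real" and a b \<kappa> h x0 y0 e1 e2 :: real
  assumes ab: "a < b"
    and dX: "\<And>t. a < t \<Longrightarrow> t < b \<Longrightarrow> (X has_real_derivative X1 t) (at t)"
    and dY: "\<And>t. a < t \<Longrightarrow> t < b \<Longrightarrow> (Y has_real_derivative Y1 t) (at t)"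
    and dX1: "\<And>t. a < t \<Longrightarrow> t < b \<Longrightarrow> (X1 has_real_derivative X2 t) (at t)"
    and dY1: "\<And>t. a < t \<Longrightarrow> t < b \<Longrightarrow> (Y1 has_real_derivative Y2 t) (at t)"
    and cX: "continuous_on {a..b} X" and cY: "continuous_on {a..b} Y"
    and cX1: "continuous_on {a..b} X1" and cY1: "continuous_on {a..b} Y1"
    and Mpos: "\<And>t. t \<in> {a..b} \<Longrightarrow> X1 t^2 + Y1 t^2 > 0"
    and curv: "\<And>t. t \<in> {a..b} \<Longrightarrow> \<bar>X1 t * Y2 t - Y1 t * X2 t\<bar> \<le> \<kappa> * sqrt (X1 t^2 + Y1 t^2)^3"
    and box: "\<And>t. t \<in> {a..b} \<Longrightarrow> x0 \<le> X t \<and> X t \<le> x0+h \<and> y0 \<le> Y t \<and> Y t \<le> y0+h"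
    and k: "\<kappa> \<ge> 0" and h: "h > 0" and kh: "8 * \<kappa> * h \<le> 1"
    and e1: "e1 = X1 a / sqrt (X1 a^2 + Y1 a^2)" and e2: "e2 = Y1 a / sqrt (X1 a^2 + Y1 a^2)"
  shows "\<And>t r. t \<in> {a..b} \<Longrightarrow> x0 \<le> X t + r * X1 t \<Longrightarrow> X t + r * X1 t \<le> x0+h \<Longrightarrow>
      y0 \<le> Y t + r * Y1 t \<Longrightarrow> Y t + r * Y1 t \<le> y0+h \<Longrightarrow>
      \<bar>(X t + r * X1 t - X a) * (-e2) + (Y t + r * Y1 t - Y a) * e1\<bar> \<le> 15 * \<kappa> * h^2
      \<and> \<bar>r\<bar> * sqrt (X1 t^2 + Y1 t^2) \<le> 3 * h"
proof -
  define S where "S = (\<lambda>t. sqrt (X1 t^2 + Y1 t^2))"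
  define c where "c = (\<lambda>t. (X1 t * e1 + Y1 t * e2) / sqrt (X1 t^2 + Y1 t^2))"
  define s where "s = (\<lambda>t. (X1 t * (-e2) + Y1 t * e1) / sqrt (X1 t^2 + Y1 t^2))"
  define p where "p = (\<lambda>t. (X t - X a) * e1 + (Y t - Y a) * e2)"
  define q where "q = (\<lambda>t. (X t - X a) * (-e2) + (Y t - Y a) * e1)"
  define \<sigma> where "\<sigma> = 8/3 * \<kappa> * h"
  have aab: "a \<in> {a..b}" using ab by auto
  have Spos: "\<And>t. t \<in> {a..b} \<Longrightarrow> S t > 0" using Mpos by (simp add: S_def)
  have SS: "\<And>t. t \<in> {a..b} \<Longrightarrow> S t * S t = X1 t^2 + Y1 t^2"
    using Mpos by (simp add: S_def less_imp_le)
  have ee: "e1^2 + e2^2 = 1"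
  proof -
    have M0: "0 < X1 a^2 + Y1 a^2" using Mpos[OF aab] .
    have "e1^2 + e2^2 = X1 a^2 / (X1 a^2 + Y1 a^2) + Y1 a^2 / (X1 a^2 + Y1 a^2)"
      using M0 by (simp add: e1 e2 power_divide)
    also have "\<dots> = 1" using M0 by (auto simp add: add_divide_distrib[symmetric])
    finally show ?thesis .
  qed
  have "e1^2 \<le> 1" "e2^2 \<le> 1" using ee zero_le_power2[of e1] zero_le_power2[of e2] by linarith+
  hence e1b: "\<bar>e1\<bar> \<le> 1" and e2b: "\<bar>e2\<bar> \<le> 1" by (simp_all add: abs_square_le_1)
  have cs: "\<And>t. t \<in> {a..b} \<Longrightarrow> c t^2 + s t^2 = 1"
  proof -
    fix t assume t: "t \<in> {a..b}"
    have "c t^2 + s t^2 = ((X1 t * e1 + Y1 t * e2)^2 + (X1 t * (-e2) + Y1 t * e1)^2) / (X1 t^2 + Y1 t^2)"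
    proof -
      have M0: "X1 t^2 + Y1 t^2 > 0" using Mpos[OF t] .
      have q1: "c t^2 = (X1 t * e1 + Y1 t * e2)^2 / (X1 t^2 + Y1 t^2)"
        unfolding c_def power_divide using M0 by simp
      have q2: "s t^2 = (X1 t * (-e2) + Y1 t * e1)^2 / (X1 t^2 + Y1 t^2)"
        unfolding s_def power_divide using M0 by simp
      show ?thesis unfolding q1 q2 by (simp add: add_divide_distrib)
    qed
    also have "(X1 t * e1 + Y1 t * e2)^2 + (X1 t * (-e2) + Y1 t * e1)^2 = (X1 t^2 + Y1 t^2) * (e1^2 + e2^2)"
      by (simp add: algebra_simps power2_eq_square)
    also have "\<dots> / (X1 t^2 + Y1 t^2) = 1" using ee Mpos[OF t] by auto
    finally show "c t^2 + s t^2 = 1" .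
  qed
  have sa: "s a = 0" by (simp add: s_def e1 e2 field_simps)
  have pa: "p a = 0" and qa: "q a = 0" by (simp_all add: p_def q_def)
  have pb: "\<bar>p t\<bar> \<le> 2 * h" if t: "t \<in> {a..b}" for t
  proof -
    have b1: "x0 \<le> X t \<and> X t \<le> x0+h \<and> y0 \<le> Y t \<and> Y t \<le> y0+h" using box[OF t] .
    have b0: "x0 \<le> X a \<and> X a \<le> x0+h \<and> y0 \<le> Y a \<and> Y a \<le> y0+h" using box[OF aab] .
    show ?thesis unfolding p_def by (rule box2[of x0 _ h y0]) (use b1 b0 e1b e2b in simp_all)
  qed
  have cS: "\<And>t. t \<in> {a..b} \<Longrightarrow> c t * S t = X1 t * e1 + Y1 t * e2"
    using Spos by (simp add: c_def S_def)
  have sS: "\<And>t. t \<in> {a..b} \<Longrightarrow> s t * S t = X1 t * (-e2) + Y1 t * e1"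
    using Spos by (simp add: s_def S_def)
  have nz: "\<forall>t\<in>{a..b}. sqrt (X1 t^2 + Y1 t^2) \<noteq> 0" using Spos unfolding S_def by (metis less_irrefl)
  have cc: "continuous_on {a..b} c" unfolding c_def using cX1 cY1 nz
    by (intro continuous_intros) auto
  have cs': "continuous_on {a..b} s" unfolding s_def using cX1 cY1 nz
    by (intro continuous_intros) auto
  have cp: "continuous_on {a..b} p" unfolding p_def using cX cY by (intro continuous_intros)
  have cq: "continuous_on {a..b} q" unfolding q_def using cX cY by (intro continuous_intros)
  have iab: "\<And>x. a < x \<Longrightarrow> x < b \<Longrightarrow> x \<in> {a..b}" by auto
  have ds: "\<And>x. a < x \<Longrightarrow> x < b \<Longrightarrow> (s has_real_derivative
     (X1 x * Y2 x - Y1 x * X2 x) * (e1 * X1 x - (-e2) * Y1 x) / ((X1 x^2 + Y1 x^2) * sqrt (X1 x^2 + Y1 x^2))) (at x)"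
    unfolding s_def by (rule s_deriv[OF dX1 dY1 Mpos]) auto
  have dp: "\<And>x. a < x \<Longrightarrow> x < b \<Longrightarrow> (p has_real_derivative X1 x * e1 + Y1 x * e2) (at x)"
    unfolding p_def by (rule derivative_eq_intros dX dY refl | assumption | simp)+
  have dq: "\<And>x. a < x \<Longrightarrow> x < b \<Longrightarrow> (q has_real_derivative X1 x * (-e2) + Y1 x * e1) (at x)"
    unfolding q_def by (rule derivative_eq_intros dX dY refl | assumption | simp)+
  have dsb: "\<And>x. a < x \<Longrightarrow> x < b \<Longrightarrow>
      \<bar>(X1 x * Y2 x - Y1 x * X2 x) * (e1 * X1 x - (-e2) * Y1 x) / ((X1 x^2 + Y1 x^2) * sqrt (X1 x^2 + Y1 x^2))\<bar> \<le> \<kappa> * S x"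
  proof -
    fix x assume x: "a < x" "x < b"
    hence xi: "x \<in> {a..b}" by auto
    have Sx: "S x > 0" using Spos[OF xi] .
    have cr: "\<bar>X1 x * Y2 x - Y1 x * X2 x\<bar> \<le> \<kappa> * S x^3" using curv[OF xi] by (simp add: S_def)
    have "(e1 * X1 x + e2 * Y1 x)^2 \<le> (e1^2 + e2^2) * (X1 x^2 + Y1 x^2)" by (rule cauchy2)
    hence "\<bar>e1 * X1 x + e2 * Y1 x\<bar> \<le> S x" unfolding S_def using ee by (intro abs_le_sqrt) simp
    hence pr: "\<bar>e1 * X1 x - (-e2) * Y1 x\<bar> \<le> S x" by simp
    have "\<bar>(X1 x * Y2 x - Y1 x * X2 x) * (e1 * X1 x - (-e2) * Y1 x)\<bar> \<le> (\<kappa> * S x^3) * S x"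
      unfolding abs_mult by (rule mult_mono[OF cr pr]) (use k Sx in auto)
    moreover have "(X1 x^2 + Y1 x^2) * sqrt (X1 x^2 + Y1 x^2) = S x ^ 3"
      using SS[OF xi] by (simp add: S_def power3_eq_cube)
    ultimately show "\<bar>(X1 x * Y2 x - Y1 x * X2 x) * (e1 * X1 x - (-e2) * Y1 x) / ((X1 x^2 + Y1 x^2) * sqrt (X1 x^2 + Y1 x^2))\<bar> \<le> \<kappa> * S x"
      using Sx by (simp add: abs_divide divide_le_eq power3_eq_cube mult_ac)
  qed
  have key: "\<And>t1. t1 \<in> {a..b} \<Longrightarrow> (\<And>x. a < x \<Longrightarrow> x < t1 \<Longrightarrow> c x \<ge> 3/4) \<Longrightarrow> \<bar>s t1\<bar> \<le> \<sigma>"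
  proof -
    fix t1 assume t1: "t1 \<in> {a..b}" and cx: "\<And>x. a < x \<Longrightarrow> x < t1 \<Longrightarrow> c x \<ge> 3/4"
    have sub: "{a..t1} \<subseteq> {a..b}" using t1 by auto
    have "\<bar>s t1 - s a\<bar> \<le> (\<lambda>t. 4/3 * \<kappa> * p t) t1 - (\<lambda>t. 4/3 * \<kappa> * p t) a"
    proof (rule cmp)
      show "a \<le> t1" using t1 by auto
      show "continuous_on {a..t1} s" using continuous_on_subset[OF cs' sub] .
      show "continuous_on {a..t1} (\<lambda>t. 4/3 * \<kappa> * p t)" using continuous_on_subset[OF cp sub]
        by (intro continuous_intros)
      fix x assume x: "a < x" "x < t1"
      hence xb: "a < x" "x < b" and xi: "x \<in> {a..b}" using t1 by auto
      show "(s has_real_derivative (X1 x * Y2 x - Y1 x * X2 x) * (e1 * X1 x - (-e2) * Y1 x) / ((X1 x^2 + Y1 x^2) * sqrt (X1 x^2 + Y1 x^2))) (at x)"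
        using ds[OF xb] .
      show "((\<lambda>t. 4/3 * \<kappa> * p t) has_real_derivative 4/3 * \<kappa> * (c x * S x)) (at x)"
        using DERIV_cmult[OF dp[OF xb], of "4/3 * \<kappa>"] cS[OF xi] by simp
      have "\<kappa> * S x * 1 \<le> \<kappa> * S x * (4/3 * c x)"
        using cx[OF x] k Spos[OF xi] by (intro mult_left_mono) auto
      thus "\<bar>(X1 x * Y2 x - Y1 x * X2 x) * (e1 * X1 x - (-e2) * Y1 x) / ((X1 x^2 + Y1 x^2) * sqrt (X1 x^2 + Y1 x^2))\<bar> \<le> 4/3 * \<kappa> * (c x * S x)"
        using dsb[OF xb] by (simp add: mult_ac)
    qed
    hence "\<bar>s t1\<bar> \<le> 4/3 * \<kappa> * p t1" using sa pa by simp
    also have "\<dots> \<le> 4/3 * \<kappa> * (2 * h)" using pb[OF t1] k by (intro mult_left_mono) auto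
    finally show "\<bar>s t1\<bar> \<le> \<sigma>" by (simp add: \<sigma>_def)
  qed
  have sig: "\<sigma> \<le> 1/3" using kh by (simp add: \<sigma>_def)
  have sig0: "\<sigma> \<ge> 0" using k h by (simp add: \<sigma>_def)
  have ca: "c a = 1"
  proof -
    have M0: "0 < X1 a^2 + Y1 a^2" using Mpos[OF aab] .
    have sq: "sqrt (X1 a^2 + Y1 a^2) * sqrt (X1 a^2 + Y1 a^2) = X1 a^2 + Y1 a^2" using M0 by simp
    have "c a = (X1 a * X1 a + Y1 a * Y1 a) / (sqrt (X1 a^2 + Y1 a^2) * sqrt (X1 a^2 + Y1 a^2))"
      by (simp add: c_def e1 e2 add_divide_distrib)
    also have "\<dots> = 1" unfolding sq using M0 by (auto simp add: power2_eq_square)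
    finally show ?thesis .
  qed
  have stepA: "\<And>t. t \<in> {a..b} \<Longrightarrow> c t > 3/4"
  proof (rule ccontr)
    fix t2 assume t2: "t2 \<in> {a..b}" and nc: "\<not> c t2 > 3/4"
    define Z where "Z = {t \<in> {a..b}. c t = 3/4}"
    have ivt: "\<And>x. x \<in> {a..b} \<Longrightarrow> c x \<le> 3/4 \<Longrightarrow> \<exists>z\<in>Z. z \<le> x"
    proof -
      fix x assume x: "x \<in> {a..b}" "c x \<le> 3/4"
      have "\<exists>z\<ge>a. z \<le> x \<and> c z = 3/4"
        using x ca continuous_on_subset[OF cc, of "{a..x}"] by (intro IVT2') auto
      thus "\<exists>z\<in>Z. z \<le> x" using x by (auto simp: Z_def)
    qed
    have Zne: "Z \<noteq> {}" using ivt[OF t2] nc by auto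
    have Zcl: "closed Z" unfolding Z_def by (rule continuous_closed_preimage_constant[OF cc]) simp
    have Zbd: "bdd_below Z" by (auto simp: Z_def bdd_below_def)
    define t1 where "t1 = Inf Z"
    have t1Z: "t1 \<in> Z" unfolding t1_def by (rule closed_contains_Inf[OF Zne Zbd Zcl])
    hence t1i: "t1 \<in> {a..b}" and ct1: "c t1 = 3/4" by (auto simp: Z_def)
    have "\<bar>s t1\<bar> \<le> \<sigma>"
    proof (rule key[OF t1i])
      fix x assume x: "a < x" "x < t1"
      show "c x \<ge> 3/4"
      proof (rule ccontr)
        assume "\<not> c x \<ge> 3/4"
        then obtain z where z: "z \<in> Z" "z \<le> x" using ivt[of x] x t1i by auto
        have "t1 \<le> z" unfolding t1_def by (rule cInf_lower[OF z(1) Zbd])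
        thus False using z x by auto
      qed
    qed
    hence "s t1^2 \<le> \<sigma>^2" using sig0 by (metis abs_le_square_iff abs_of_nonneg power2_abs)
    also have "\<sigma>^2 \<le> (1/3)^2" using sig sig0 by (intro power_mono) auto
    finally have "s t1^2 \<le> 1/9" by (simp add: power2_eq_square)
    moreover have "s t1^2 = 7/16" using cs[OF t1i] ct1 by (simp add: power2_eq_square)
    ultimately show False by simp
  qed
  have stepB: "\<And>t. t \<in> {a..b} \<Longrightarrow> \<bar>s t\<bar> \<le> \<sigma>"
    by (rule key) (use stepA in \<open>auto intro: less_imp_le\<close>)
  have stepC: "\<And>t. t \<in> {a..b} \<Longrightarrow> \<bar>q t\<bar> \<le> 8/3 * \<sigma> * h"
  proof -
    fix t1 assume t1: "t1 \<in> {a..b}"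
    have sub: "{a..t1} \<subseteq> {a..b}" using t1 by auto
    have "\<bar>q t1 - q a\<bar> \<le> (\<lambda>t. 4/3 * \<sigma> * p t) t1 - (\<lambda>t. 4/3 * \<sigma> * p t) a"
    proof (rule cmp)
      show "a \<le> t1" using t1 by auto
      show "continuous_on {a..t1} q" using continuous_on_subset[OF cq sub] .
      show "continuous_on {a..t1} (\<lambda>t. 4/3 * \<sigma> * p t)" using continuous_on_subset[OF cp sub]
        by (intro continuous_intros)
      fix x assume x: "a < x" "x < t1"
      hence xb: "a < x" "x < b" and xi: "x \<in> {a..b}" using t1 by auto
      show "(q has_real_derivative s x * S x) (at x)"
        using dq[OF xb] sS[OF xi] by simp
      show "((\<lambda>t. 4/3 * \<sigma> * p t) has_real_derivative 4/3 * \<sigma> * (c x * S x)) (at x)"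
        using DERIV_cmult[OF dp[OF xb], of "4/3 * \<sigma>"] cS[OF xi] by simp
      have "\<bar>s x * S x\<bar> \<le> \<sigma> * S x" unfolding abs_mult abs_of_pos[OF Spos[OF xi]] using stepB[OF xi] Spos[OF xi]
        by (intro mult_right_mono) auto
      also have "\<sigma> * S x * 1 \<le> \<sigma> * S x * (4/3 * c x)"
        using stepA[OF xi] sig0 Spos[OF xi] by (intro mult_left_mono) auto
      finally show "\<bar>s x * S x\<bar> \<le> 4/3 * \<sigma> * (c x * S x)" by (simp add: mult_ac)
    qed
    hence "\<bar>q t1\<bar> \<le> 4/3 * \<sigma> * p t1" using qa pa by simp
    also have "\<dots> \<le> 4/3 * \<sigma> * (2 * h)" using pb[OF t1] sig0 by (intro mult_left_mono) auto
    finally show "\<bar>q t1\<bar> \<le> 8/3 * \<sigma> * h" by simp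
  qed
  fix t r assume t: "t \<in> {a..b}" and r: "x0 \<le> X t + r * X1 t" "X t + r * X1 t \<le> x0+h"
      "y0 \<le> Y t + r * Y1 t" "Y t + r * Y1 t \<le> y0+h"
  have "\<bar>(X t + r * X1 t - X t) * e1 + (Y t + r * Y1 t - Y t) * e2\<bar> \<le> 2 * h"
    using box[OF t] r e1b e2b by (intro box2) auto
  hence "\<bar>r * (c t * S t)\<bar> \<le> 2 * h" using cS[OF t] by (simp add: algebra_simps)
  moreover have "\<bar>r * (c t * S t)\<bar> = \<bar>r\<bar> * S t * c t"
    using stepA[OF t] Spos[OF t] by (simp add: abs_mult mult_ac)
  ultimately have r1: "\<bar>r\<bar> * S t * c t \<le> 2 * h" by simp
  have "\<bar>r\<bar> * S t * (3/4) \<le> \<bar>r\<bar> * S t * c t"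
    using stepA[OF t] Spos[OF t] by (intro mult_left_mono) auto
  hence rS: "\<bar>r\<bar> * S t \<le> 8/3 * h" using r1 by linarith
  have "(X t + r * X1 t - X a) * (-e2) + (Y t + r * Y1 t - Y a) * e1 = q t + r * (s t * S t)"
  proof -
    have "(X t + r * X1 t - X a) * (-e2) + (Y t + r * Y1 t - Y a) * e1 = q t + r * (X1 t * (-e2) + Y1 t * e1)"
      by (simp add: q_def algebra_simps)
    thus ?thesis using sS[OF t] by simp
  qed
  moreover have "\<bar>r * (s t * S t)\<bar> \<le> 8/3 * h * \<sigma>"
  proof -
    have "\<bar>r * (s t * S t)\<bar> = (\<bar>r\<bar> * S t) * \<bar>s t\<bar>" using Spos[OF t] by (simp add: abs_mult mult_ac)
    also have "\<dots> \<le> 8/3 * h * \<sigma>" by (rule mult_mono[OF rS stepB[OF t]]) (use h Spos[OF t] in auto)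
    finally show ?thesis .
  qed
  ultimately have "\<bar>(X t + r * X1 t - X a) * (-e2) + (Y t + r * Y1 t - Y a) * e1\<bar> \<le> 8/3 * \<sigma> * h + 8/3 * h * \<sigma>"
    using stepC[OF t] by linarith
  also have "\<dots> \<le> 15 * \<kappa> * h^2" using k h by (simp add: \<sigma>_def power2_eq_square)
  finally show "\<bar>(X t + r * X1 t - X a) * (-e2) + (Y t + r * Y1 t - Y a) * e1\<bar> \<le> 15 * \<kappa> * h^2
      \<and> \<bar>r\<bar> * sqrt (X1 t^2 + Y1 t^2) \<le> 3 * h" using rS h by (simp add: S_def)
qed



lemma hvd_fst: "(g has_vector_derivative v) F \<Longrightarrow> ((\<lambda>t. fst (g t)) has_real_derivative fst v) F"
  unfolding has_vector_derivative_def has_field_derivative_def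
  by (drule has_derivative_fst, erule has_derivative_eq_rhs) (simp add: fun_eq_iff)

lemma hvd_snd: "(g has_vector_derivative v) F \<Longrightarrow> ((\<lambda>t. snd (g t)) has_real_derivative snd v) F"
  unfolding has_vector_derivative_def has_field_derivative_def
  by (drule has_derivative_snd, erule has_derivative_eq_rhs) (simp add: fun_eq_iff)

lemma corner_in:
  assumes "h > 0"
  shows "sq_corner h i j k \<in> cbox (of_int i * h, of_int j * h) (of_int i * h + h, of_int j * h + h)"
  using assms by (auto simp: sq_corner_def cbox_interval algebra_simps)

lemma mesh_box:
  assumes "mesh_element h T Edges" "h > 0"
  shows "\<exists>x0 y0. T \<subseteq> cbox (x0,y0) (x0+h,y0+h) \<and> compact T"
  using assms(1) unfolding mesh_element_def
proof
  assume "rect_element h T Edges"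
  then obtain i j where T: "T = convex hull {sq_corner h i j 0, sq_corner h i j 1, sq_corner h i j 2, sq_corner h i j 3}"
    unfolding rect_element_def by blast
  have "T \<subseteq> cbox (of_int i * h, of_int j * h) (of_int i * h + h, of_int j * h + h)"
    unfolding T by (rule hull_minimal) (use corner_in[OF assms(2)] in \<open>auto simp: convex_box\<close>)
  moreover have "compact T" unfolding T by (intro compact_convex_hull finite_imp_compact) auto
  ultimately show ?thesis by blast
next
  assume "tri_element h T Edges"
  then obtain i j k where T: "T = convex hull {sq_corner h i j (k+1), sq_corner h i j (k+2), sq_corner h i j (k+3)}"
    unfolding tri_element_def Let_def by blast
  have "T \<subseteq> cbox (of_int i * h, of_int j * h) (of_int i * h + h, of_int j * h + h)"
    unfolding T by (rule hull_minimal) (use corner_in[OF assms(2)] in \<open>auto simp: convex_box\<close>)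
  moreover have "compact T" unfolding T by (intro compact_convex_hull finite_imp_compact) auto
  ultimately show ?thesis by blast
qed

theorem mainTheorem4:
  fixes \<kappa> :: real
  assumes "\<kappa> \<ge> 0"
  shows "\<exists>C h0. C > 0 \<and> h0 > 0 \<and>
    (\<forall>h T Edges g g1 g2 a b.
       0 < h \<and> h < h0 \<and> mesh_element h T Edges \<and> interface_arc \<kappa> g g1 g2 a b T Edges \<longrightarrow>
       tangent_region g g1 a b T \<in> sets lebesgue \<and>
       measure lebesgue (tangent_region g g1 a b T) \<le> C * h ^ 3)"
proof (intro exI conjI allI impI)
  show "60 * \<kappa> + 1 > 0" using assms by simp
  show "1 / (8 * (\<kappa> + 1)) > 0" using assms by simp
  fix h T Edges g g1 g2 a b
  assume H: "0 < h \<and> h < 1 / (8 * (\<kappa> + 1)) \<and> mesh_element h T Edges \<and> interface_arc \<kappa> g g1 g2 a b T Edges"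
  hence h: "h > 0" and hh: "h < 1 / (8 * (\<kappa> + 1))" and me: "mesh_element h T Edges"
    and ia: "interface_arc \<kappa> g g1 g2 a b T Edges" by auto
  have k: "\<kappa> \<ge> 0" using assms .
  have kh: "8 * \<kappa> * h \<le> 1"
  proof -
    have "h * (8 * (\<kappa> + 1)) < 1" using hh assms by (simp add: field_simps)
    thus ?thesis using h by (simp add: algebra_simps)
  qed
  obtain x0 y0 where TQ: "T \<subseteq> cbox (x0,y0) (x0+h,y0+h)" and cT: "compact T"
    using mesh_box[OF me h] by blast
  from ia have ab: "a < b"
    and dg: "\<And>t. t \<in> {a..b} \<Longrightarrow> (g has_vector_derivative g1 t) (at t within {a..b})"
    and dg1: "\<And>t. t \<in> {a..b} \<Longrightarrow> (g1 has_vector_derivative g2 t) (at t within {a..b})"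
    and nz: "\<And>t. t \<in> {a..b} \<Longrightarrow> g1 t \<noteq> 0"
    and cv: "\<And>t. t \<in> {a..b} \<Longrightarrow> \<bar>cross2 (g1 t) (g2 t)\<bar> / norm (g1 t) ^ 3 \<le> \<kappa>"
    and gi: "g ` {a<..<b} \<subseteq> interior T" and ga: "g a \<in> frontier T" and gb: "g b \<in> frontier T"
    unfolding interface_arc_def by auto
  have cg: "continuous_on {a..b} g" by (rule continuous_on_vector_derivative[OF dg])
  have cg1: "continuous_on {a..b} g1" by (rule continuous_on_vector_derivative[OF dg1])
  have gT: "g t \<in> T" if t: "t \<in> {a..b}" for t
  proof -
    have clT: "closed T" using cT by (rule compact_imp_closed)
    show ?thesis
    proof (cases "t = a \<or> t = b")
      case True thus ?thesis using ga gb frontier_subset_closed[OF clT] by auto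
    next
      case False hence "t \<in> {a<..<b}" using t by auto
      thus ?thesis using gi interior_subset by blast
    qed
  qed
  define X where "X = (\<lambda>t. fst (g t))"
  define Y where "Y = (\<lambda>t. snd (g t))"
  define X1 where "X1 = (\<lambda>t. fst (g1 t))"
  define Y1 where "Y1 = (\<lambda>t. snd (g1 t))"
  define X2 where "X2 = (\<lambda>t. fst (g2 t))"
  define Y2 where "Y2 = (\<lambda>t. snd (g2 t))"
  define e1 where "e1 = X1 a / sqrt (X1 a^2 + Y1 a^2)"
  define e2 where "e2 = Y1 a / sqrt (X1 a^2 + Y1 a^2)"
  have atw: "\<And>t. a < t \<Longrightarrow> t < b \<Longrightarrow> at t within {a..b} = at t" by (rule at_within_Icc_at)
  have nrm: "\<And>t. norm (g1 t) = sqrt (X1 t^2 + Y1 t^2)" by (simp add: norm_prod_def X1_def Y1_def)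
  have dX: "(X has_real_derivative X1 t) (at t)" and dY: "(Y has_real_derivative Y1 t) (at t)"
    and dX1: "(X1 has_real_derivative X2 t) (at t)" and dY1: "(Y1 has_real_derivative Y2 t) (at t)"
    if t: "a < t" "t < b" for t
  proof -
    have ti: "t \<in> {a..b}" using t by auto
    show "(X has_real_derivative X1 t) (at t)" unfolding X_def X1_def
      using hvd_fst[OF dg[OF ti]] atw[OF t] by simp
    show "(Y has_real_derivative Y1 t) (at t)" unfolding Y_def Y1_def
      using hvd_snd[OF dg[OF ti]] atw[OF t] by simp
    show "(X1 has_real_derivative X2 t) (at t)" unfolding X2_def X1_def
      using hvd_fst[OF dg1[OF ti]] atw[OF t] by simp
    show "(Y1 has_real_derivative Y2 t) (at t)" unfolding Y2_def Y1_def
      using hvd_snd[OF dg1[OF ti]] atw[OF t] by simp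
  qed
  have cX: "continuous_on {a..b} X" unfolding X_def using cg by (intro continuous_intros)
  have cY: "continuous_on {a..b} Y" unfolding Y_def using cg by (intro continuous_intros)
  have cX1: "continuous_on {a..b} X1" unfolding X1_def using cg1 by (intro continuous_intros)
  have cY1: "continuous_on {a..b} Y1" unfolding Y1_def using cg1 by (intro continuous_intros)
  have Mpos: "X1 t^2 + Y1 t^2 > 0"
    and curv: "\<bar>X1 t * Y2 t - Y1 t * X2 t\<bar> \<le> \<kappa> * sqrt (X1 t^2 + Y1 t^2)^3"
    and box: "x0 \<le> X t \<and> X t \<le> x0+h \<and> y0 \<le> Y t \<and> Y t \<le> y0+h"
    if t: "t \<in> {a..b}" for t
  proof -
    have "norm (g1 t) > 0" using nz[OF t] by simp
    hence sp: "sqrt (X1 t^2 + Y1 t^2) > 0" using nrm by simp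
    thus "X1 t^2 + Y1 t^2 > 0" by simp
    have "\<bar>cross2 (g1 t) (g2 t)\<bar> / sqrt (X1 t^2 + Y1 t^2) ^ 3 \<le> \<kappa>" using cv[OF t] nrm by simp
    hence "\<bar>cross2 (g1 t) (g2 t)\<bar> \<le> \<kappa> * sqrt (X1 t^2 + Y1 t^2) ^ 3"
      using sp by (simp add: divide_le_eq)
    thus "\<bar>X1 t * Y2 t - Y1 t * X2 t\<bar> \<le> \<kappa> * sqrt (X1 t^2 + Y1 t^2)^3"
      by (simp add: cross2_def X1_def Y1_def X2_def Y2_def)
    have "g t \<in> cbox (x0,y0) (x0+h,y0+h)" using gT[OF t] TQ by auto
    hence "(X t, Y t) \<in> cbox (x0,y0) (x0+h,y0+h)" by (simp add: X_def Y_def)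
    thus "x0 \<le> X t \<and> X t \<le> x0+h \<and> y0 \<le> Y t \<and> Y t \<le> y0+h" by (simp add: cbox_interval)
  qed
  note CORE = core[OF ab dX dY dX1 dY1 cX cY cX1 cY1 Mpos curv box k h kh e1_def e2_def]
  define TR where "TR = tangent_region g g1 a b T"
  define w where "w = 15 * \<kappa> * h^2"
  define SS where "SS = {p. p \<in> cbox (x0,y0) (x0+h,y0+h) \<and> \<bar>(fst p - X a)*(-e2) + (snd p - Y a)*e1\<bar> \<le> w}"
  have memTR: "x \<in> TR \<longleftrightarrow> (\<exists>t\<in>{a..b}. \<exists>r. x = g t + r *\<^sub>R g1 t \<and> x \<in> T)" for x
    by (auto simp: TR_def tangent_region_def)
  have key: "x \<in> SS \<and> \<bar>r\<bar> * norm (g1 t) \<le> 3 * h" if t: "t \<in> {a..b}" and x: "x = g t + r *\<^sub>R g1 t" "x \<in> T" for x t r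
  proof -
    have xQ: "x \<in> cbox (x0,y0) (x0+h,y0+h)" using x TQ by auto
    have fx: "fst x = X t + r * X1 t" and sx: "snd x = Y t + r * Y1 t"
      using x by (simp_all add: X_def Y_def X1_def Y1_def)
    have "(fst x, snd x) \<in> cbox (x0,y0) (x0+h,y0+h)" using xQ by simp
    hence bx: "x0 \<le> X t + r * X1 t \<and> X t + r * X1 t \<le> x0+h \<and> y0 \<le> Y t + r * Y1 t \<and> Y t + r * Y1 t \<le> y0+h"
      unfolding fx sx by (simp add: cbox_interval)
    have C: "\<bar>(X t + r * X1 t - X a) * (-e2) + (Y t + r * Y1 t - Y a) * e1\<bar> \<le> 15 * \<kappa> * h^2
      \<and> \<bar>r\<bar> * sqrt (X1 t^2 + Y1 t^2) \<le> 3 * h"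
      by (rule CORE[OF _ _ _ _ _ _ _ _ _ _ _ t]) (use bx in auto)
    show ?thesis using C xQ unfolding SS_def w_def fx[symmetric] sx[symmetric] nrm by simp
  qed
  have TRSS: "TR \<subseteq> SS" using key memTR by blast
  have cinv: "continuous_on {a..b} (\<lambda>t. 1 / norm (g1 t))" using cg1 nz by (intro continuous_intros) auto
  obtain B where B: "B > 0" "\<And>t. t \<in> {a..b} \<Longrightarrow> norm (1 / norm (g1 t)) \<le> B"
    using bounded_pos[THEN iffD1, OF compact_imp_bounded[OF compact_continuous_image[OF cinv compact_Icc]]]
    by auto
  define R where "R = 3 * h * B"
  define F where "F = (\<lambda>p::real\<times>real. g (fst p) + snd p *\<^sub>R g1 (fst p))"
  define K where "K = ({a..b} \<times> {-R..R}) \<inter> F -` T"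
  have cfst1: "continuous_on ({a..b} \<times> {-R..R}) (\<lambda>p. g (fst p))"
    by (rule continuous_on_compose2[OF cg continuous_on_fst[OF continuous_on_id]]) auto
  have cfst2: "continuous_on ({a..b} \<times> {-R..R}) (\<lambda>p. g1 (fst p))"
    by (rule continuous_on_compose2[OF cg1 continuous_on_fst[OF continuous_on_id]]) auto
  have cF: "continuous_on ({a..b} \<times> {-R..R}) F" unfolding F_def using cfst1 cfst2
    by (intro continuous_intros)
  have clK: "closed K" unfolding K_def
    by (rule continuous_closed_preimage[OF cF]) (auto intro: closed_Times compact_imp_closed cT)
  have cK: "compact K"
  proof -
    have "compact (({a..b} \<times> {-R..R}) \<inter> K)" by (intro compact_Int_closed compact_Times compact_Icc clK)
    moreover have "({a..b} \<times> {-R..R}) \<inter> K = K" by (auto simp: K_def)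
    ultimately show ?thesis by simp
  qed
  have TReq: "TR = F ` K"
  proof
    show "TR \<subseteq> F ` K"
    proof
      fix x assume "x \<in> TR"
      then obtain t r where t: "t \<in> {a..b}" and x: "x = g t + r *\<^sub>R g1 t" "x \<in> T" using memTR by blast
      have n0: "norm (g1 t) > 0" using nz[OF t] by simp
      have "\<bar>r\<bar> * norm (g1 t) \<le> 3 * h" using key[OF t x] by blast
      hence "\<bar>r\<bar> \<le> 3 * h * (1 / norm (g1 t))" using n0 by (simp add: field_simps)
      also have "\<dots> \<le> 3 * h * B" using B(2)[OF t] h by (intro mult_left_mono) auto
      finally have "\<bar>r\<bar> \<le> R" by (simp add: R_def)
      hence "(t, r) \<in> K" using t x by (auto simp: K_def F_def)
      moreover have "x = F (t, r)" using x by (simp add: F_def)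
      ultimately show "x \<in> F ` K" by blast
    qed
  next
    show "F ` K \<subseteq> TR"
    proof
      fix x assume "x \<in> F ` K"
      then obtain t r where tr: "(t, r) \<in> K" and x: "x = F (t, r)" by auto
      have "t \<in> {a..b}" "x = g t + r *\<^sub>R g1 t" "x \<in> T" using tr x by (auto simp: K_def F_def)
      thus "x \<in> TR" unfolding memTR by blast
    qed
  qed
  have cTR: "compact TR" unfolding TReq
    by (rule compact_continuous_image[OF continuous_on_subset[OF cF] cK]) (auto simp: K_def)
  have TRm: "TR \<in> sets lebesgue" using lmeasurable_compact[OF cTR] by (rule fmeasurableD)
  have cSS: "compact SS"
  proof -
    have cl: "closed {p::real\<times>real. \<bar>(fst p - X a)*(-e2) + (snd p - Y a)*e1\<bar> \<le> w}"
      by (intro closed_Collect_le continuous_intros)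
    have "SS = cbox (x0,y0) (x0+h,y0+h) \<inter> {p::real\<times>real. \<bar>(fst p - X a)*(-e2) + (snd p - Y a)*e1\<bar> \<le> w}"
      by (auto simp: SS_def)
    thus ?thesis using cl by (simp add: compact_Int_closed)
  qed
  have "measure lebesgue TR \<le> measure lebesgue SS"
    by (rule measure_mono_fmeasurable[OF TRSS TRm lmeasurable_compact[OF cSS]])
  also have "\<dots> \<le> 4 * w * h" unfolding SS_def
  proof (rule strip_measure)
    have M0: "X1 a^2 + Y1 a^2 > 0" using Mpos[of a] ab by auto
    have "(-e2)^2 + e1^2 = X1 a^2 / (X1 a^2 + Y1 a^2) + Y1 a^2 / (X1 a^2 + Y1 a^2)"
      using M0 by (simp add: e1_def e2_def power_divide)
    also have "\<dots> = 1" using M0 by (auto simp add: add_divide_distrib[symmetric])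
    finally show "(-e2)^2 + e1^2 = 1" .
    show "w \<ge> 0" using k by (simp add: w_def)
    show "h \<ge> 0" using h by simp
  qed
  also have "\<dots> = 60 * \<kappa> * h^3" by (simp add: w_def power2_eq_square power3_eq_cube)
  also have "\<dots> \<le> (60 * \<kappa> + 1) * h^3" using h by (simp add: algebra_simps)
  finally show "measure lebesgue (tangent_region g g1 a b T) \<le> (60 * \<kappa> + 1) * h ^ 3"
    by (simp add: TR_def)
  show "tangent_region g g1 a b T \<in> sets lebesgue" using TRm by (simp add: TR_def)
qed


end
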